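(* For every $c\geq 2$ let $L_c=(1,2,c)$. Then $\lim_{c\to\infty}\rho_{2,L_c}=\frac16$.
   Context: Let $X$ be a finite alphabet with $n\geq 2$ letters and $X^*$ the set of words over $X$; $|v|$ is the length of a word $v$. A code over $X$ is a finite sequence $C=(v_1,\ldots,v_m)$ of words over $X$ such that every $w\in X^*$ has at most one factorization into code-words: if $w=v_{i_1}\cdots v_{i_l}=v_{j_1}\cdots v_{j_{l'}}$ with $l,l'\geq1$, then $l=l'$ and $i_t=j_t$ for all $t$. (Codes are sequences, not sets.) A code $C=(v_1,\ldots,v_m)$ is a prefix code if for all $i,j$, $v_i$ is a prefix of $v_j$ if and only if $i=j$. For a finite sequence $L=(a_1,\ldots,a_m)$ of positive integers, $UD_n(L)$ is the set of all codes $(v_1,\ldots,v_m)$ over an $n$-letter alphabet with $|v_i|=a_i$ for all $i$, $PR_n(L)\subseteq UD_n(L)$ is the subset of prefix codes, and $\rho_{n,L}=|PR_n(L)|/|UD_n(L)|$ (defined when $UD_n(L)\ne\emptyset$). *)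

theory Defs
  imports "HOL-Analysis.Analysis" "HOL-Library.Sublist"
begin

definition word_over :: "nat \<Rightarrow> nat list \<Rightarrow> bool" where
  "word_over n w \<longleftrightarrow> (\<forall>x\<in>set w. x < n)"

definition is_code :: "nat \<Rightarrow> nat list list \<Rightarrow> bool" where
  "is_code n C \<longleftrightarrow> (\<forall>v\<in>set C. word_over n v) \<and>
     (\<forall>is js. is \<noteq> [] \<longrightarrow> js \<noteq> [] \<longrightarrow>
        (\<forall>i\<in>set is. i < length C) \<longrightarrow> (\<forall>j\<in>set js. j < length C) \<longrightarrow>
        concat (map (\<lambda>i. C ! i) is) = concat (map (\<lambda>j. C ! j) js) \<longrightarrow> is = js)"

definition is_prefix_code :: "nat \<Rightarrow> nat list list \<Rightarrow> bool" where
  "is_prefix_code n C \<longleftrightarrow> is_code n C \<and>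
     (\<forall>i<length C. \<forall>j<length C. prefix (C ! i) (C ! j) \<longleftrightarrow> i = j)"

definition UD :: "nat \<Rightarrow> nat list \<Rightarrow> nat list list set" where
  "UD n L = {C. length C = length L \<and> (\<forall>i<length L. length (C ! i) = L ! i) \<and> is_code n C}"

definition PR :: "nat \<Rightarrow> nat list \<Rightarrow> nat list list set" where
  "PR n L = {C \<in> UD n L. is_prefix_code n C}"

definition rho :: "nat \<Rightarrow> nat list \<Rightarrow> real" where
  "rho n L = real (card (PR n L)) / real (card (UD n L))"

end

theory Submission
  imports Defs
begin

definition F :: "nat list list \<Rightarrow> nat list \<Rightarrow> nat list" where
  "F C xs = concat (map (\<lambda>i. C ! i) xs)"

lemma F_simps[simp]: "F C [] = []" "F C (i # xs) = C ! i @ F C xs" "F C (xs @ js) = F C xs @ F C js"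
  by (simp_all add: F_def)

lemma prefix_uinj:
  assumes ne: "\<forall>i<length C. C ! i \<noteq> []"
    and inc: "\<forall>i<length C. \<forall>j<length C. prefix (C ! i) (C ! j) \<longrightarrow> i = j"
  shows "set xs \<subseteq> {..<length C} \<Longrightarrow> set js \<subseteq> {..<length C} \<Longrightarrow> F C xs = F C js \<Longrightarrow> xs = js"
proof (induction xs arbitrary: js)
  case Nil
  then show ?case using ne by (cases js) auto
next
  case (Cons i xs)
  then obtain j js' where js: "js = j # js'" using ne by (cases js) auto
  have e: "C ! i @ F C xs = C ! j @ F C js'" using Cons.prems js by simp
  have p1: "prefix (C ! i) (C ! i @ F C xs)" by simp
  have p2: "prefix (C ! j) (C ! i @ F C xs)" unfolding e by simp
  from prefix_same_cases[OF p1 p2]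
  have "prefix (C ! i) (C ! j) \<or> prefix (C ! j) (C ! i)" .
  then have "i = j" using inc Cons.prems js by auto
  then show ?case using Cons js e by auto
qed

inductive_set KK :: "nat list \<Rightarrow> nat list \<Rightarrow> nat list set" for x1 x2 where
  KK_nil: "[] \<in> KK x1 x2"
| KK_1: "v \<in> KK x1 x2 \<Longrightarrow> x1 @ v \<in> KK x1 x2"
| KK_2: "v \<in> KK x1 x2 \<Longrightarrow> x2 @ v \<in> KK x1 x2"

lemma F_KK: "set xs \<subseteq> {0,1} \<Longrightarrow> F [x1, x2, w] xs \<in> KK x1 x2"
proof (induction xs)
  case Nil then show ?case by (simp add: KK_nil)
next
  case (Cons i xs)
  then show ?case by (auto intro: KK_1 KK_2)
qed

lemma KK_inv: "z \<in> KK x1 x2 \<Longrightarrow> z = [] \<or> (\<exists>v. z = x1 @ v \<and> v \<in> KK x1 x2) \<or> (\<exists>v. z = x2 @ v \<and> v \<in> KK x1 x2)"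
  by (erule KK.cases) auto

lemma KK_unit:
  assumes "x1 \<noteq> []" "x2 \<noteq> []" "\<not> prefix x1 x2" "\<not> prefix x2 x1"
  shows "A \<in> KK x1 x2 \<Longrightarrow> A @ u \<in> KK x1 x2 \<Longrightarrow> u \<in> KK x1 x2"
proof (induction A rule: KK.induct)
  case KK_nil then show ?case by simp
next
  case (KK_1 v)
  from KK_1.prems have "x1 @ (v @ u) \<in> KK x1 x2" by simp
  from KK_inv[OF this] have "v @ u \<in> KK x1 x2"
  proof (elim disjE exE conjE)
    assume "x1 @ v @ u = []" then show ?thesis using assms by simp
  next
    fix v' assume h: "x1 @ v @ u = x1 @ v'" "v' \<in> KK x1 x2"
    then show ?thesis by simp
  next
    fix v' assume h: "x1 @ v @ u = x2 @ v'" "v' \<in> KK x1 x2"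
    have "prefix x1 (x1 @ v @ u)" "prefix x2 (x1 @ v @ u)" using h(1) by (metis prefixI)+ then show ?thesis using assms prefix_same_cases by blast
  qed
  then show ?case using KK_1.IH by simp
next
  case (KK_2 v)
  from KK_2.prems have "x2 @ (v @ u) \<in> KK x1 x2" by simp
  from KK_inv[OF this] have "v @ u \<in> KK x1 x2"
  proof (elim disjE exE conjE)
    assume "x2 @ v @ u = []" then show ?thesis using assms by simp
  next
    fix v' assume h: "x2 @ v @ u = x1 @ v'" "v' \<in> KK x1 x2"
    have "prefix x1 (x2 @ v @ u)" "prefix x2 (x2 @ v @ u)" using h(1) by (metis prefixI)+ then show ?thesis using assms prefix_same_cases by blast
  next
    fix v' assume h: "x2 @ v @ u = x2 @ v'" "v' \<in> KK x1 x2"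
    then show ?thesis by simp
  qed
  then show ?case using KK_2.IH by simp
qed

lemma first_occ:
  "sublist P w \<Longrightarrow> P \<noteq> [] \<Longrightarrow> \<exists>w1 w2. w = w1 @ P @ w2 \<and> \<not> sublist P (w1 @ butlast P)"
proof (induction w)
  case Nil then show ?case by simp
next
  case (Cons x w)
  show ?case
  proof (cases "prefix P (x # w)")
    case True
    then obtain w2 where "x # w = P @ w2" by (auto simp: prefix_def)
    moreover have "\<not> sublist P (butlast P)"
    proof
      assume "sublist P (butlast P)"
      then have "length P \<le> length (butlast P)" by (rule sublist_length_le)
      then have "length P \<le> length P - 1" by (simp only: length_butlast)
      moreover have "length P > 0" using Cons.prems(2) by simp
      ultimately show False by linarith
    qed
    ultimately show ?thesis by (intro exI[of _ "[]"] exI[of _ w2]) (simp del: append_Cons)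
  next
    case False
    have "sublist P w" using Cons.prems(1) False by (simp add: sublist_Cons_right)
    then obtain w1 w2 where w: "w = w1 @ P @ w2" "\<not> sublist P (w1 @ butlast P)" using Cons.IH Cons.prems by blast
    have "prefix (butlast P) (P @ w2)" using prefixeq_butlast prefix_prefix by blast
    then have pp: "prefix (x # w1 @ butlast P) (x # w)" using w(1) by simp
    have "\<not> prefix P (x # w1 @ butlast P)"
    proof
      assume "prefix P (x # w1 @ butlast P)"
      then have "prefix P (x # w)" using pp by (rule prefix_order.trans)
      with False show False by simp
    qed
    then have "\<not> sublist P (x # w1 @ butlast P)" using w(2) by (simp add: sublist_Cons_right)
    then show ?thesis using w(1) by (intro exI[of _ "x # w1"] exI[of _ w2]) auto
  qed
qed

lemma key_lemma:
  assumes ne: "x1 \<noteq> []" "x2 \<noteq> []" and inc: "\<not> prefix x1 x2" "\<not> prefix x2 x1"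
    and noP: "\<forall>v\<in>KK x1 x2. \<not> sublist P v"
    and Pne: "P \<noteq> []"
    and wd: "w = w1 @ P @ w2" "\<not> sublist P (w1 @ butlast P)"
    and nostr: "\<And>u y p1 p2. u \<in> KK x1 x2 \<Longrightarrow> u \<noteq> [] \<Longrightarrow> p1 \<noteq> [] \<Longrightarrow> p2 \<noteq> [] \<Longrightarrow>
        P = p1 @ p2 \<Longrightarrow> suffix p1 u \<Longrightarrow> prefix p2 w \<Longrightarrow> prefix u (w @ y) \<Longrightarrow> False"
    and A: "A \<in> KK x1 x2" "A' \<in> KK x1 x2"
    and eq: "A @ w @ S = A' @ w @ S'"
    and lt: "length A < length A'"
  shows False
proof -
  have pa1: "prefix A (A @ w @ S)" by simp
  have pa2: "prefix A' (A @ w @ S)" unfolding eq by simp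
  have "prefix A A'" by (rule prefix_length_prefix[OF pa1 pa2]) (use lt in simp)
  then obtain u where u1: "A' = A @ u" by (auto simp: prefix_def)
  with eq have u2: "w @ S = u @ w @ S'" by simp
  have une: "u \<noteq> []" using lt u1 by auto
  have uK: "u \<in> KK x1 x2" using KK_unit[OF ne inc A(1)] A(2) u1 by simp
  have pu: "prefix u (w @ S)" using u2 by simp
  have Z: "w1 @ P @ w2 @ S = u @ w1 @ P @ w2 @ S'" using u2 wd(1) by simp
  show False
  proof (cases "length u \<le> length w1")
    case True
    have pb1: "prefix u (w1 @ P @ w2 @ S)" unfolding Z by simp
    have pb2: "prefix w1 (w1 @ P @ w2 @ S)" by simp
    have "prefix u w1" by (rule prefix_length_prefix[OF pb1 pb2]) (use True in simp)
    then obtain r where r: "w1 = u @ r" by (auto simp: prefix_def)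
    from Z have Z2: "r @ P @ w2 @ S = w1 @ P @ w2 @ S'" by (simp add: r)
    have "prefix (r @ P) (w1 @ P @ w2 @ S')" unfolding Z2[symmetric] by simp
    moreover have "prefix (butlast P) (P @ w2 @ S')" using prefixeq_butlast prefix_prefix by blast
    then have "prefix (w1 @ butlast P) (w1 @ P @ w2 @ S')" by simp
    moreover have "length (r @ P) \<le> length (w1 @ butlast P)"
    proof -
      have "0 < length u" "0 < length P" using une Pne by simp_all
      then show ?thesis unfolding r by (simp only: length_append length_butlast)
    qed
    ultimately have "prefix (r @ P) (w1 @ butlast P)" by (rule prefix_length_prefix)
    then obtain t where t: "w1 @ butlast P = r @ P @ t" by (auto simp: prefix_def)
    have "sublist P (r @ P @ t)" by (rule sublist_appendI)
    then have "sublist P (w1 @ butlast P)" by (simp only: t)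
    with wd(2) show False by simp
  next
    case False
    have pc1: "prefix w1 (u @ w1 @ P @ w2 @ S')" unfolding Z[symmetric] by simp
    have pc2: "prefix u (u @ w1 @ P @ w2 @ S')" by simp
    have "prefix w1 u" by (rule prefix_length_prefix[OF pc1 pc2]) (use False in simp)
    then obtain q where q: "u = w1 @ q" by (auto simp: prefix_def)
    have qne: "q \<noteq> []" using q False by auto
    from Z have Z2: "P @ w2 @ S = q @ w1 @ P @ w2 @ S'" by (simp add: q)
    show False
    proof (cases "length P \<le> length q")
      case True
      have pd1: "prefix P (q @ w1 @ P @ w2 @ S')" unfolding Z2[symmetric] by simp
      have pd2: "prefix q (q @ w1 @ P @ w2 @ S')" by simp
      have "prefix P q" by (rule prefix_length_prefix[OF pd1 pd2]) (use True in simp)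
      then obtain t where t: "q = P @ t" by (auto simp: prefix_def)
      have "sublist P (w1 @ P @ t)" by (rule sublist_appendI)
      then have "sublist P u" by (simp only: q t)
      with noP uK show False by blast
    next
      case False
      have pe1: "prefix q (P @ w2 @ S)" unfolding Z2 by simp
      have pe2: "prefix P (P @ w2 @ S)" by simp
      have "prefix q P" by (rule prefix_length_prefix[OF pe1 pe2]) (use False in simp)
      then obtain p2 where p2: "P = q @ p2" by (auto simp: prefix_def)
      have p2ne: "p2 \<noteq> []" using p2 False by auto
      from Z2 have "p2 @ w2 @ S = w @ S'" using p2 wd(1) by simp
      then have "prefix p2 (w @ S')" by (metis prefixI)
      moreover have "prefix w (w @ S')" by simp
      moreover have "length p2 \<le> length w" using p2 wd(1) by simp
      ultimately have "prefix p2 w" by (rule prefix_length_prefix)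
      moreover have "suffix q u" using q by (simp add: suffix_def)
      ultimately show False using nostr[OF uK une qne p2ne p2 _ _ pu] by blast
    qed
  qed
qed


lemma F_restrict: "set as \<subseteq> {0,1} \<Longrightarrow> F [x1, x2, w] as = F [x1, x2] as"
  by (induction as) auto

lemma gen_uinj:
  assumes ne: "x1 \<noteq> []" "x2 \<noteq> []" and inc: "\<not> prefix x1 x2" "\<not> prefix x2 x1"
    and noP: "\<forall>v\<in>KK x1 x2. \<not> sublist P v"
    and Pne: "P \<noteq> []"
    and wd: "w = w1 @ P @ w2" "\<not> sublist P (w1 @ butlast P)"
    and nostr: "\<And>u y p1 p2. u \<in> KK x1 x2 \<Longrightarrow> u \<noteq> [] \<Longrightarrow> p1 \<noteq> [] \<Longrightarrow> p2 \<noteq> [] \<Longrightarrow>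
        P = p1 @ p2 \<Longrightarrow> suffix p1 u \<Longrightarrow> prefix p2 w \<Longrightarrow> prefix u (w @ y) \<Longrightarrow> False"
  shows "set xs \<subseteq> {..<3} \<Longrightarrow> set ys \<subseteq> {..<3} \<Longrightarrow> F [x1, x2, w] xs = F [x1, x2, w] ys \<Longrightarrow> xs = ys"
proof (induction "length xs + length ys" arbitrary: xs ys rule: less_induct)
  case less
  have Kcode: "as = bs" if "set as \<subseteq> {0,1}" "set bs \<subseteq> {0,1}" "F [x1, x2, w] as = F [x1, x2, w] bs" for as bs
  proof -
    have "F [x1, x2] as = F [x1, x2] bs" using that F_restrict by metis
    moreover have "set as \<subseteq> {..<length [x1, x2]}" "set bs \<subseteq> {..<length [x1, x2]}" using that by auto
    moreover have "\<forall>i<length [x1, x2]. [x1, x2] ! i \<noteq> []" using ne by (auto simp: less_Suc_eq)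
    moreover have "\<forall>i<length [x1, x2]. \<forall>j<length [x1, x2]. prefix ([x1, x2] ! i) ([x1, x2] ! j) \<longrightarrow> i = j"
      using inc by (auto simp: less_Suc_eq)
    ultimately show ?thesis using prefix_uinj by blast
  qed
  have sub01: "set as \<subseteq> {0,1}" if "set as \<subseteq> {..<3}" "2 \<notin> set as" for as :: "nat list"
    using that by (auto simp: less_Suc_eq numeral_3_eq_3 numeral_2_eq_2)
  have hasP: "sublist P (F [x1, x2, w] as)" if h: "2 \<in> set as" for as
  proof -
    obtain as1 as2 where "as = as1 @ 2 # as2" using split_list[OF h] by blast
    then have "F [x1, x2, w] as = F [x1, x2, w] as1 @ w1 @ P @ (w2 @ F [x1, x2, w] as2)"
      using wd(1) by simp
    then show ?thesis by (metis sublist_appendI append.assoc)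
  qed
  consider "2 \<notin> set xs" "2 \<notin> set ys" | "2 \<in> set xs" "2 \<notin> set ys" | "2 \<notin> set xs" "2 \<in> set ys"
    | "2 \<in> set xs" "2 \<in> set ys" by blast
  then show ?case
  proof cases
    case 1
    then show ?thesis using Kcode sub01 less.prems by blast
  next
    case 2
    have "F [x1, x2, w] ys \<in> KK x1 x2" using F_KK sub01 less.prems 2 by blast
    then show ?thesis using noP hasP[OF 2(1)] less.prems(3) by auto
  next
    case 3
    have "F [x1, x2, w] xs \<in> KK x1 x2" using F_KK sub01 less.prems 3 by blast
    then show ?thesis using noP hasP[OF 3(2)] less.prems(3) by auto
  next
    case 4
    obtain xs1 xs2 where xs: "xs = xs1 @ 2 # xs2" "2 \<notin> set xs1" using split_list_first[OF 4(1)] by blast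
    obtain ys1 ys2 where ys: "ys = ys1 @ 2 # ys2" "2 \<notin> set ys1" using split_list_first[OF 4(2)] by blast
    have s1: "set xs1 \<subseteq> {0,1}" "set ys1 \<subseteq> {0,1}" using sub01 xs ys less.prems by auto
    define A where "A = F [x1, x2, w] xs1"
    define A' where "A' = F [x1, x2, w] ys1"
    define S where "S = F [x1, x2, w] xs2"
    define S' where "S' = F [x1, x2, w] ys2"
    have AK: "A \<in> KK x1 x2" "A' \<in> KK x1 x2" unfolding A_def A'_def using F_KK s1 by blast+
    have eq: "A @ w @ S = A' @ w @ S'" using less.prems(3) unfolding xs ys A_def A'_def S_def S'_def by simp
    have "\<not> length A < length A'"
    proof
      assume l: "length A < length A'"
      show False by (rule key_lemma[OF ne inc noP Pne wd _ AK eq l]) (rule nostr; assumption)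
    qed
    moreover have "\<not> length A' < length A"
    proof
      assume l: "length A' < length A"
      show False by (rule key_lemma[OF ne inc noP Pne wd _ AK(2,1) eq[symmetric] l]) (rule nostr; assumption)
    qed
    ultimately have "length A = length A'" by simp
    with eq have "A = A'" "w @ S = w @ S'" using append_eq_append_conv by blast+
    then have "S = S'" by simp
    have "xs1 = ys1" using Kcode s1 \<open>A = A'\<close> unfolding A_def A'_def by blast
    moreover have "xs2 = ys2"
    proof (rule less.hyps)
      show "length xs2 + length ys2 < length xs + length ys" using xs ys by simp
      show "set xs2 \<subseteq> {..<3}" "set ys2 \<subseteq> {..<3}" using less.prems xs ys by auto
      show "F [x1, x2, w] xs2 = F [x1, x2, w] ys2" using \<open>S = S'\<close> unfolding S_def S'_def .
    qed
    ultimately show ?thesis using xs ys by simp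
  qed
qed


definition uinj :: "nat list list \<Rightarrow> bool" where
  "uinj C \<longleftrightarrow> (\<forall>xs ys. set xs \<subseteq> {..<length C} \<longrightarrow> set ys \<subseteq> {..<length C} \<longrightarrow> F C xs = F C ys \<longrightarrow> xs = ys)"

lemma F_rev: "set xs \<subseteq> {..<length C} \<Longrightarrow> F (map rev C) (rev xs) = rev (F C xs)"
  by (induction xs) auto

lemma uinj_rev: "uinj (map rev C) \<Longrightarrow> uinj C"
  unfolding uinj_def
proof (intro allI impI)
  fix xs ys
  assume H: "\<forall>xs ys. set xs \<subseteq> {..<length (map rev C)} \<longrightarrow> set ys \<subseteq> {..<length (map rev C)} \<longrightarrow>
      F (map rev C) xs = F (map rev C) ys \<longrightarrow> xs = ys"
    and h: "set xs \<subseteq> {..<length C}" "set ys \<subseteq> {..<length C}" "F C xs = F C ys"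
  have "F (map rev C) (rev xs) = F (map rev C) (rev ys)" using F_rev h by metis
  then have "rev xs = rev ys" using H[rule_format, of "rev xs" "rev ys"] h by simp
  then show "xs = ys" by simp
qed

lemma KK_ba: "v \<in> KK [a] [b, a] \<Longrightarrow> a \<noteq> b \<Longrightarrow> \<not> sublist [b, b] v \<and> (v \<noteq> [] \<longrightarrow> last v = a)"
  by (induction v rule: KK.induct) (auto simp: sublist_Cons_right)

lemma split2: "p1 @ p2 = [x, y] \<Longrightarrow> p1 \<noteq> [] \<Longrightarrow> p2 \<noteq> [] \<Longrightarrow> p1 = [x] \<and> p2 = [y]"
  by (cases p1; cases p2) (auto simp: append_eq_Cons_conv)

lemma split3: "p1 @ p2 = [x, y, z] \<Longrightarrow> p1 \<noteq> [] \<Longrightarrow> p2 \<noteq> [] \<Longrightarrow>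
    (p1 = [x] \<and> p2 = [y, z]) \<or> (p1 = [x, y] \<and> p2 = [z])"
  by (cases p1; cases p2) (auto simp: append_eq_Cons_conv)

lemma ud_ba:
  assumes ab: "a \<noteq> b" and w: "sublist [b, b] w"
  shows "uinj [[a], [b, a], w]"
proof -
  obtain w1 w2 where wd: "w = w1 @ [b, b] @ w2" "\<not> sublist [b, b] (w1 @ butlast [b, b])"
    using first_occ[OF w] by blast
  show ?thesis unfolding uinj_def
  proof (intro allI impI)
    fix xs ys assume h: "set xs \<subseteq> {..<length [[a], [b, a], w]}" "set ys \<subseteq> {..<length [[a], [b, a], w]}"
      "F [[a], [b, a], w] xs = F [[a], [b, a], w] ys"
    show "xs = ys"
    proof (rule gen_uinj[of "[a]" "[b, a]" "[b, b]" w w1 w2])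
      show "\<forall>v\<in>KK [a] [b, a]. \<not> sublist [b, b] v" using KK_ba ab by blast
      show "w = w1 @ [b, b] @ w2" "\<not> sublist [b, b] (w1 @ butlast [b, b])" by (fact wd)+
      fix u y p1 p2
      assume u: "u \<in> KK [a] [b, a]" "u \<noteq> []" and p: "p1 \<noteq> []" "p2 \<noteq> []" "[b, b] = p1 @ p2"
        and su: "suffix p1 u"
      have "p1 = [b]" using split2[OF p(3)[symmetric] p(1,2)] by simp
      with su obtain zs where "u = zs @ [b]" by (auto simp: suffix_def)
      then show False using KK_ba[OF u(1) ab] ab by simp
    qed (use ab h in auto)
  qed
qed

lemma KK_bb: "v \<in> KK [a] [b, b] \<Longrightarrow> a \<noteq> b \<Longrightarrow> \<not> sublist [a, b, a] v \<and>
    (v = [] \<or> hd v = a \<or> take 2 v = [b, b]) \<and> (\<forall>zs. v \<noteq> zs @ [a, b]) \<and> v \<noteq> [b]"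
proof (induction v rule: KK.induct)
  case KK_nil then show ?case by simp
next
  case (KK_1 v)
  then show ?case by (cases v) (auto simp: sublist_Cons_right Cons_eq_append_conv)
next
  case (KK_2 v)
  then show ?case by (cases v) (auto simp: sublist_Cons_right Cons_eq_append_conv)
qed

lemma ud_bb:
  assumes ab: "a \<noteq> b" and w: "sublist [a, b, a] w"
  shows "uinj [[a], [b, b], w]"
proof -
  obtain w1 w2 where wd: "w = w1 @ [a, b, a] @ w2" "\<not> sublist [a, b, a] (w1 @ butlast [a, b, a])"
    using first_occ[OF w] by blast
  show ?thesis unfolding uinj_def
  proof (intro allI impI)
    fix xs ys assume h: "set xs \<subseteq> {..<length [[a], [b, b], w]}" "set ys \<subseteq> {..<length [[a], [b, b], w]}"
      "F [[a], [b, b], w] xs = F [[a], [b, b], w] ys"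
    show "xs = ys"
    proof (rule gen_uinj[of "[a]" "[b, b]" "[a, b, a]" w w1 w2])
      show "\<forall>v\<in>KK [a] [b, b]. \<not> sublist [a, b, a] v" using KK_bb ab by blast
      show "w = w1 @ [a, b, a] @ w2" "\<not> sublist [a, b, a] (w1 @ butlast [a, b, a])" by (fact wd)+
      fix u y p1 p2
      assume u: "u \<in> KK [a] [b, b]" "u \<noteq> []" and p: "p1 \<noteq> []" "p2 \<noteq> []" "[a, b, a] = p1 @ p2"
        and su: "suffix p1 u" and pw: "prefix p2 w" and pu: "prefix u (w @ y)"
      note I = KK_bb[OF u(1) ab]
      from split3[OF p(3)[symmetric] p(1,2)] show False
      proof (elim disjE conjE)
        assume "p1 = [a]" "p2 = [b, a]"
        then obtain t where "w = b # a # t" using pw by (auto simp: prefix_def)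
        then have "prefix u (b # a # t @ y)" using pu by simp
        then obtain t' where "b # a # t @ y = u @ t'" by (auto simp: prefix_def)
        then show False using I u(2) ab by (cases u; cases "tl u") (auto simp: Cons_eq_append_conv)
      next
        assume "p1 = [a, b]" "p2 = [a]"
        with su obtain zs where "u = zs @ [a, b]" by (auto simp: suffix_def)
        then show False using I by blast
      qed
    qed (use ab h in auto)
  qed
qed

lemma ud_ab:
  assumes ab: "a \<noteq> b" and w: "sublist [b, b] w"
  shows "uinj [[a], [a, b], w]"
proof (rule uinj_rev)
  have "sublist [b, b] (rev w)" using w by (simp add: sublist_rev_right)
  then show "uinj (map rev [[a], [a, b], w])" using ud_ba[OF ab] by simp
qed


definition W :: "nat \<Rightarrow> nat list set" where
  "W k = {w. set w \<subseteq> {..<2} \<and> length w = k}"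

lemma W_card: "card (W k) = 2 ^ k"
  unfolding W_def using card_lists_length_eq[of "{..<2::nat}" k] by simp

lemma W_finite[simp]: "finite (W k)"
  unfolding W_def using finite_lists_length_eq[of "{..<2::nat}" k] by simp

definition Av :: "nat list \<Rightarrow> nat \<Rightarrow> nat list set" where
  "Av Q k = {w \<in> W k. \<not> sublist Q w}"

lemma Av_finite[simp]: "finite (Av Q k)"
  unfolding Av_def by simp

lemma Av3_bound:
  assumes Q: "Q \<in> W 3"
  shows "card (Av Q k) \<le> 7 ^ (k div 3) * 2 ^ (k mod 3)"
proof (induction k rule: less_induct)
  case (less k)
  show ?case
  proof (cases "k < 3")
    case True
    have "card (Av Q k) \<le> card (W k)" unfolding Av_def by (rule card_mono) auto
    then show ?thesis using True by (simp add: W_card)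
  next
    case False
    then obtain m where k: "k = m + 3" by (metis add.commute le_Suc_ex not_less)
    have sub: "Av Q k \<subseteq> (\<lambda>(u, v). u @ v) ` ((W 3 - {Q}) \<times> Av Q m)"
    proof
      fix w assume w: "w \<in> Av Q k"
      have "take 3 w \<in> W 3" using w k unfolding Av_def W_def by (auto dest: in_set_takeD)
      moreover have "take 3 w \<noteq> Q"
      proof
        assume "take 3 w = Q"
        then have "sublist Q w" by (metis prefix_imp_sublist take_is_prefix)
        with w show False unfolding Av_def by simp
      qed
      moreover have "drop 3 w \<in> Av Q m"
      proof -
        have "\<not> sublist Q (drop 3 w)"
          using w sublist_order.order.trans[OF _ sublist_drop, of Q 3 w] unfolding Av_def by blast
        then show ?thesis using w k unfolding Av_def W_def by (auto dest: in_set_dropD)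
      qed
      ultimately show "w \<in> (\<lambda>(u, v). u @ v) ` ((W 3 - {Q}) \<times> Av Q m)"
        by (intro image_eqI[of _ _ "(take 3 w, drop 3 w)"]) auto
    qed
    have "card (Av Q k) \<le> card ((\<lambda>(u, v). u @ v) ` ((W 3 - {Q}) \<times> Av Q m))"
      by (rule card_mono[OF _ sub]) simp
    also have "\<dots> \<le> card ((W 3 - {Q}) \<times> Av Q m)" by (rule card_image_le) simp
    also have "\<dots> = 7 * card (Av Q m)" using Q by (simp add: card_cartesian_product W_card)
    also have "\<dots> \<le> 7 * (7 ^ (m div 3) * 2 ^ (m mod 3))" using less.IH[of m] k by simp
    also have "\<dots> = 7 ^ (k div 3) * 2 ^ (k mod 3)" using k by simp
    finally show ?thesis .
  qed
qed

lemma Av_bound: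
  assumes Q: "set Q \<subseteq> {..<2}" "length Q \<le> 3"
  shows "card (Av Q k) \<le> 7 ^ (k div 3) * 2 ^ (k mod 3)"
proof -
  define Q3 where "Q3 = Q @ replicate (3 - length Q) 0"
  have "Q3 \<in> W 3" using Q unfolding Q3_def W_def by auto
  moreover have "Av Q k \<subseteq> Av Q3 k"
  proof
    fix w assume "w \<in> Av Q k"
    moreover have "sublist Q Q3" unfolding Q3_def by simp
    ultimately show "w \<in> Av Q3 k" unfolding Av_def by (auto dest: sublist_order.order.trans)
  qed
  then have "card (Av Q k) \<le> card (Av Q3 k)" by (rule card_mono[rotated]) simp
  ultimately show ?thesis using Av3_bound by (meson order_trans)
qed


lemma all_less3: "(\<forall>i<3. P i) \<longleftrightarrow> P 0 \<and> P 1 \<and> P (2::nat)"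
proof
  assume "\<forall>i<3. P i" then show "P 0 \<and> P 1 \<and> P 2" by simp
next
  assume h: "P 0 \<and> P 1 \<and> P 2"
  show "\<forall>i<3. P i"
  proof (intro allI impI)
    fix i :: nat assume "i < 3"
    then have "i = 0 \<or> i = 1 \<or> i = 2" by auto
    with h show "P i" by auto
  qed
qed

lemma UD_mem: "C \<in> UD 2 [1, 2, c] \<longleftrightarrow>
    (\<exists>x y w. C = [x, y, w] \<and> length x = 1 \<and> length y = 2 \<and> length w = c \<and> is_code 2 [x, y, w])"
proof
  assume "C \<in> UD 2 [1, 2, c]"
  then have h: "length C = 3" "length (C ! 0) = 1" "length (C ! 1) = 2" "length (C ! 2) = c" "is_code 2 C"
    unfolding UD_def by (auto simp: all_less3)
  obtain x y w where "C = [x, y, w]" using h(1) by (auto simp: numeral_3_eq_3 length_Suc_conv)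
  then show "\<exists>x y w. C = [x, y, w] \<and> length x = 1 \<and> length y = 2 \<and> length w = c \<and> is_code 2 [x, y, w]"
    using h by auto
next
  assume "\<exists>x y w. C = [x, y, w] \<and> length x = 1 \<and> length y = 2 \<and> length w = c \<and> is_code 2 [x, y, w]"
  then show "C \<in> UD 2 [1, 2, c]" unfolding UD_def by (auto simp: less_Suc_eq)
qed

lemma code_words: "is_code 2 C \<Longrightarrow> v \<in> set C \<Longrightarrow> set v \<subseteq> {..<2}"
  unfolding is_code_def word_over_def by auto

lemma not_code_xx: "\<not> is_code 2 [x, x @ x, w]"
proof
  assume "is_code 2 [x, x @ x, w]"
  then have "\<forall>is js. is \<noteq> [] \<longrightarrow> js \<noteq> [] \<longrightarrow> (\<forall>i\<in>set is. i < length [x, x @ x, w]) \<longrightarrow> (\<forall>j\<in>set js. j < length [x, x @ x, w]) \<longrightarrow>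
        concat (map (\<lambda>i. [x, x @ x, w] ! i) is) = concat (map (\<lambda>j. [x, x @ x, w] ! j) js) \<longrightarrow> is = js"
    unfolding is_code_def by blast
  from this[rule_format, of "[1]" "[0, 0]"] show False by simp
qed

lemma uinj_code: "(\<forall>v\<in>set C. set v \<subseteq> {..<2}) \<Longrightarrow> uinj C \<Longrightarrow> is_code 2 C"
  unfolding is_code_def uinj_def word_over_def F_def by (auto simp: subset_iff)

definition Qf :: "nat \<Rightarrow> nat list \<Rightarrow> nat list" where
  "Qf a y = (if y = [1 - a, 1 - a] then [a, 1 - a, a] else [1 - a, 1 - a])"

lemma good_uinj:
  assumes a: "a < 2" and y: "y \<in> W 2" "y \<noteq> [a, a]" and w: "sublist (Qf a y) w"
  shows "uinj [[a], y, w]"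
proof -
  obtain p q where yy: "y = [p, q]" "p < 2" "q < 2" using y(1) unfolding W_def
    by (auto simp: numeral_2_eq_2 length_Suc_conv)
  have "a = 0 \<or> a = 1" "p = 0 \<or> p = 1" "q = 0 \<or> q = 1" using a yy by auto
  then show ?thesis using y(2) w yy(1)
    using ud_ab[of 0 1 w] ud_ab[of 1 0 w] ud_ba[of 0 1 w] ud_ba[of 1 0 w] ud_bb[of 0 1 w] ud_bb[of 1 0 w]
    by (elim disjE) (auto simp: Qf_def)
qed

definition GS :: "nat \<Rightarrow> (nat \<times> nat list \<times> nat list) set" where
  "GS c = (SIGMA a:{..<2}. SIGMA y:(W 2 - {[a, a]}). {w \<in> W c. sublist (Qf a y) w})"

lemma GS_sub: "(\<lambda>(a, y, w). [[a], y, w]) ` GS c \<subseteq> UD 2 [1, 2, c]"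
proof
  fix C assume "C \<in> (\<lambda>(a, y, w). [[a], y, w]) ` GS c"
  then obtain a y w where C: "C = [[a], y, w]" "a < 2" "y \<in> W 2" "y \<noteq> [a, a]" "w \<in> W c" "sublist (Qf a y) w"
    unfolding GS_def by auto
  have "is_code 2 [[a], y, w]"
    using C good_uinj[of a y w] by (intro uinj_code) (auto simp: W_def)
  then show "C \<in> UD 2 [1, 2, c]" unfolding UD_mem using C by (auto simp: W_def)
qed

lemma card_W2_minus: "card (W 2 - {[a, a]}) = 3" if "a < 2"
proof -
  have "[a, a] \<in> W 2" using that by (simp add: W_def)
  then show ?thesis by (simp add: card_Diff_singleton W_card)
qed

lemma GS_card: "6 * (2 ^ c - 7 ^ (c div 3) * 2 ^ (c mod 3)) \<le> card (GS c)"
proof -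
  let ?N = "7 ^ (c div 3) * 2 ^ (c mod 3) :: nat"
  have fin: "finite (W 2 - {[a, a]})" for a by simp
  have each: "2 ^ c - ?N \<le> card {w \<in> W c. sublist (Qf a y) w}" if "a < 2" for a y
  proof -
    have "set (Qf a y) \<subseteq> {..<2}" "length (Qf a y) \<le> 3" using that by (auto simp: Qf_def)
    then have "card (Av (Qf a y) c) \<le> ?N" by (rule Av_bound)
    moreover have "{w \<in> W c. sublist (Qf a y) w} = W c - Av (Qf a y) c" unfolding Av_def by auto
    moreover have "card (W c - Av (Qf a y) c) = 2 ^ c - card (Av (Qf a y) c)"
      by (subst card_Diff_subset) (auto simp: Av_def W_card)
    ultimately show ?thesis by simp
  qed
  have "card (GS c) = (\<Sum>a<2. \<Sum>y\<in>W 2 - {[a, a]}. card {w \<in> W c. sublist (Qf a y) w})"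
    unfolding GS_def by (simp add: card_SigmaI)
  also have "\<dots> \<ge> (\<Sum>a<2. \<Sum>y\<in>W 2 - {[a, a]}. 2 ^ c - ?N)"
    by (intro sum_mono) (use each in auto)
  also have "(\<Sum>a<2. \<Sum>y\<in>W 2 - {[a, a]}. 2 ^ c - ?N) = (\<Sum>a<(2::nat). 3 * (2 ^ c - ?N))"
    by (intro sum.cong) (auto simp: card_W2_minus)
  also have "\<dots> = 6 * (2 ^ c - ?N)" by simp
  finally show ?thesis .
qed

lemma GS_inj: "inj_on (\<lambda>(a, y, w). [[a], y, w]) (GS c)"
  by (auto simp: inj_on_def)

lemma UD_sub: "UD 2 [1, 2, c] \<subseteq> (\<lambda>(x, y, w). [x, y, w]) ` (SIGMA x:W 1. (W 2 - {x @ x}) \<times> W c)"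
proof
  fix C assume "C \<in> UD 2 [1, 2, c]"
  then obtain x y w where C: "C = [x, y, w]" "length x = 1" "length y = 2" "length w = c" "is_code 2 [x, y, w]"
    unfolding UD_mem by blast
  have "y \<noteq> x @ x" using C(5) not_code_xx by blast
  moreover have "set x \<subseteq> {..<2}" "set y \<subseteq> {..<2}" "set w \<subseteq> {..<2}"
    using code_words[OF C(5)] by auto
  ultimately show "C \<in> (\<lambda>(x, y, w). [x, y, w]) ` (SIGMA x:W 1. (W 2 - {x @ x}) \<times> W c)"
    using C by (intro image_eqI[of _ _ "(x, y, w)"]) (auto simp: W_def)
qed

lemma UD_finite: "finite (UD 2 [1, 2, c])"
  by (rule finite_subset[OF UD_sub]) auto

lemma UD_upper: "card (UD 2 [1, 2, c]) \<le> 6 * 2 ^ c"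
proof -
  have "card (UD 2 [1, 2, c]) \<le> card ((\<lambda>(x, y, w). [x, y, w]) ` (SIGMA x:W 1. (W 2 - {x @ x}) \<times> W c))"
    by (rule card_mono[OF _ UD_sub]) auto
  also have "\<dots> \<le> card (SIGMA x:W 1. (W 2 - {x @ x}) \<times> W c)" by (rule card_image_le) auto
  also have "\<dots> = (\<Sum>x\<in>W 1. card ((W 2 - {x @ x}) \<times> W c))" by (simp add: card_SigmaI)
  also have "\<dots> = (\<Sum>x\<in>W 1. 3 * 2 ^ c)"
  proof (intro sum.cong refl)
    fix x assume "x \<in> W 1"
    then have "x @ x \<in> W 2" by (auto simp: W_def)
    then show "card ((W 2 - {x @ x}) \<times> W c) = 3 * 2 ^ c"
      by (simp add: card_cartesian_product card_Diff_singleton W_card)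
  qed
  also have "\<dots> = 6 * 2 ^ c" by (simp add: W_card)
  finally show ?thesis .
qed

lemma UD_lower: "6 * (2 ^ c - 7 ^ (c div 3) * 2 ^ (c mod 3)) \<le> card (UD 2 [1, 2, c])"
proof -
  have "card (GS c) = card ((\<lambda>(a, y, w). [[a], y, w]) ` GS c)" by (rule card_image[OF GS_inj, symmetric])
  also have "\<dots> \<le> card (UD 2 [1, 2, c])" by (rule card_mono[OF UD_finite GS_sub])
  finally show ?thesis using GS_card by (meson order_trans)
qed


definition PRimg :: "nat \<Rightarrow> nat list list set" where
  "PRimg c = (\<lambda>(a, q, t). [[a], [1 - a, q], [1 - a, 1 - q] @ t]) ` ({..<2} \<times> {..<2} \<times> W (c - 2))"

lemma PR_sub: assumes c: "2 \<le> c" shows "PR 2 [1, 2, c] \<subseteq> PRimg c"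
proof
  fix C assume C: "C \<in> PR 2 [1, 2, c]"
  then have "C \<in> UD 2 [1, 2, c]" and pc: "is_prefix_code 2 C" unfolding PR_def by auto
  then obtain x y w where xyw: "C = [x, y, w]" "length x = 1" "length y = 2" "length w = c" "is_code 2 [x, y, w]"
    unfolding UD_mem by blast
  obtain a where xa: "x = [a]" using xyw(2) by (auto simp: length_Suc_conv)
  obtain p q where yp: "y = [p, q]" using xyw(3) by (auto simp: numeral_2_eq_2 length_Suc_conv)
  obtain w0 w1 t where wt: "w = w0 # w1 # t" using xyw(4) c
    by (cases w; cases "tl w") auto
  have sets: "set x \<subseteq> {..<2}" "set y \<subseteq> {..<2}" "set w \<subseteq> {..<2}" using code_words[OF xyw(5)] by auto
  have pr: "\<forall>i<3. \<forall>j<3. prefix (C ! i) (C ! j) \<longleftrightarrow> i = j"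
    using pc xyw(1) unfolding is_prefix_code_def by simp
  have "\<not> prefix x y" using pr[rule_format, of 0 1] xyw(1) by simp
  then have "p \<noteq> a" using xa yp by auto
  have "\<not> prefix x w" using pr[rule_format, of 0 2] xyw(1) by simp
  then have "w0 \<noteq> a" using xa wt by auto
  have "\<not> prefix y w" using pr[rule_format, of 1 2] xyw(1) by simp
  then have "\<not> (w0 = p \<and> w1 = q)" using yp wt by auto
  have lt: "a < 2" "p < 2" "q < 2" "w0 < 2" "w1 < 2" using sets xa yp wt by auto
  have "p = 1 - a" "w0 = 1 - a" using lt \<open>p \<noteq> a\<close> \<open>w0 \<noteq> a\<close> by auto
  moreover have "w1 = 1 - q" using lt \<open>\<not> (w0 = p \<and> w1 = q)\<close> calculation by auto
  moreover have "t \<in> W (c - 2)" using sets wt xyw(4) by (auto simp: W_def)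
  ultimately show "C \<in> PRimg c" unfolding PRimg_def
    using xyw(1) xa yp wt lt by (intro image_eqI[of _ _ "(a, q, t)"]) auto
qed

lemma PR_sup: assumes c: "2 \<le> c" shows "PRimg c \<subseteq> PR 2 [1, 2, c]"
proof
  fix C assume "C \<in> PRimg c"
  then obtain a q t where C: "C = [[a], [1 - a, q], [1 - a, 1 - q] @ t]" "a < 2" "q < 2" "t \<in> W (c - 2)"
    unfolding PRimg_def by auto
  have ne1: "1 - a \<noteq> a" "1 - q \<noteq> q" using C(2,3) by presburger+
  have sets: "\<forall>v\<in>set C. set v \<subseteq> {..<2}" using C by (auto simp: W_def)
  have inc: "\<forall>i<length C. \<forall>j<length C. prefix (C ! i) (C ! j) \<longrightarrow> i = j"
    using ne1 unfolding C(1) by (auto simp: less_Suc_eq)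
  have nne: "\<forall>i<length C. C ! i \<noteq> []" unfolding C(1) by (auto simp: less_Suc_eq)
  have "uinj C" unfolding uinj_def using prefix_uinj[OF nne inc] by blast
  then have code: "is_code 2 C" using sets by (rule uinj_code[rotated])
  have "C \<in> UD 2 [1, 2, c]" unfolding UD_mem using C c code by (auto simp: W_def)
  moreover have "is_prefix_code 2 C" unfolding is_prefix_code_def using code inc by auto
  ultimately show "C \<in> PR 2 [1, 2, c]" unfolding PR_def by simp
qed

lemma PR_card: assumes c: "2 \<le> c" shows "card (PR 2 [1, 2, c]) = 2 ^ c"
proof -
  have "PR 2 [1, 2, c] = PRimg c" using PR_sub[OF c] PR_sup[OF c] by blast
  moreover have "inj_on (\<lambda>(a, q, t). [[a], [1 - a, q], [1 - a, 1 - q] @ t]) ({..<2::nat} \<times> {..<2::nat} \<times> W (c - 2))"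
    by (auto simp: inj_on_def)
  ultimately have "card (PR 2 [1, 2, c]) = card ({..<2::nat} \<times> {..<2::nat} \<times> W (c - 2))"
    unfolding PRimg_def by (simp add: card_image)
  also have "\<dots> = 4 * 2 ^ (c - 2)" by (simp add: card_cartesian_product W_card)
  also have "\<dots> = 2 ^ c" using c by (metis (no_types) le_add_diff_inverse power_add power2_eq_square numeral_Bit0 mult_2 numeral_One)
  finally show ?thesis .
qed


lemma div3_tendsto: "filterlim (\<lambda>c::nat. c div 3) sequentially sequentially"
  unfolding filterlim_at_top eventually_sequentially
proof
  fix Z :: nat
  show "\<exists>N. \<forall>n\<ge>N. Z \<le> n div 3" by (intro exI[of _ "3 * Z"]) auto
qed

lemma pow78: "(\<lambda>c::nat. (7 / 8 :: real) ^ (c div 3)) \<longlonglongrightarrow> 0"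
  using filterlim_compose[OF LIMSEQ_power_zero[of "7 / 8 :: real"] div3_tendsto] by simp

lemma N_ratio: "real (7 ^ (c div 3) * 2 ^ (c mod 3)) / 2 ^ c = (7 / 8 :: real) ^ (c div 3)"
proof -
  have cc: "3 * (c div 3) + c mod 3 = c" by simp
  have "(2::real) ^ c = 2 ^ (3 * (c div 3) + c mod 3)" by (simp only: cc)
  also have "\<dots> = 8 ^ (c div 3) * 2 ^ (c mod 3)" unfolding power_add power_mult by simp
  finally have e: "(2::real) ^ c = 8 ^ (c div 3) * 2 ^ (c mod 3)" .
  show ?thesis unfolding e by (simp add: power_divide)
qed

theorem theorem6:
  shows "(\<lambda>c::nat. rho 2 [1, 2, c]) \<longlonglongrightarrow> 1 / 6"
proof -
  define r where "r c = real (card (UD 2 [1, 2, c])) / 2 ^ c" for c :: nat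
  have up: "r c \<le> 6" for c
  proof -
    have "real (card (UD 2 [1, 2, c])) \<le> real (6 * 2 ^ c)" using UD_upper[of c] by (rule of_nat_mono)
    then have "real (card (UD 2 [1, 2, c])) \<le> 6 * 2 ^ c" by simp
    then show ?thesis unfolding r_def by (simp add: divide_le_eq)
  qed
  have low: "6 - 6 * (7 / 8) ^ (c div 3) \<le> r c" for c
  proof -
    let ?N = "7 ^ (c div 3) * 2 ^ (c mod 3) :: nat"
    have "6 * (2 ^ c - real ?N) \<le> real (card (UD 2 [1, 2, c]))"
    proof (cases "?N \<le> 2 ^ c")
      case True
      have "real (6 * (2 ^ c - ?N)) \<le> real (card (UD 2 [1, 2, c]))" using UD_lower[of c] by simp
      then show ?thesis using True by (simp add: of_nat_diff)
    next
      case False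
      then have "(2::real) ^ c - real ?N < 0"
        by (metis (mono_tags, lifting) diff_less_0_iff_less not_le of_nat_less_iff of_nat_numeral of_nat_power)
      then show ?thesis by (smt (verit) of_nat_0_le_iff)
    qed
    then have "6 * (2 ^ c - real ?N) / 2 ^ c \<le> r c" unfolding r_def by (simp add: divide_right_mono)
    moreover have "6 * (2 ^ c - real ?N) / 2 ^ c = 6 - 6 * (real ?N / 2 ^ c)"
      by (simp add: field_simps)
    ultimately show ?thesis using N_ratio[of c] by simp
  qed
  have rlim: "r \<longlonglongrightarrow> 6"
  proof (rule tendsto_sandwich[of "\<lambda>c. 6 - 6 * (7 / 8) ^ (c div 3)" r sequentially "\<lambda>c. 6"])
    show "\<forall>\<^sub>F n in sequentially. 6 - 6 * (7 / 8) ^ (n div 3) \<le> r n" using low by simp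
    show "\<forall>\<^sub>F n in sequentially. r n \<le> 6" using up by simp
    show "(\<lambda>n. 6 - 6 * (7 / 8 :: real) ^ (n div 3)) \<longlonglongrightarrow> 6"
      using tendsto_diff[OF tendsto_const tendsto_mult[OF tendsto_const pow78], of 6 6] by simp
    show "(\<lambda>n. 6::real) \<longlonglongrightarrow> 6" by simp
  qed
  have "(\<lambda>c. 1 / r c) \<longlonglongrightarrow> 1 / 6"
    by (rule tendsto_divide[OF tendsto_const rlim]) simp
  moreover have "\<forall>\<^sub>F c in sequentially. 1 / r c = rho 2 [1, 2, c]"
    unfolding eventually_sequentially
  proof (intro exI[of _ 2] allI impI)
    fix c :: nat assume "2 \<le> c"
    then show "1 / r c = rho 2 [1, 2, c]" unfolding r_def rho_def using PR_card by simp
  qed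
  ultimately show ?thesis by (rule Lim_transform_eventually)
qed

end
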